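(* Let $\varepsilon \in (0,1)$ and $\alpha \in \left(0, \frac{1-\varepsilon}{3}\right)$, and let $$U_{\alpha}= \begin{pmatrix} 0 & -1 & \varepsilon & -\alpha \\ \varepsilon & 0 & -1 & -\alpha \\ -1 & \varepsilon & 0 & -\alpha \\ \frac{-1+\varepsilon}{3}+\alpha & \frac{-1+\varepsilon}{3}+\alpha & \frac{-1+\varepsilon}{3}+\alpha & 0 \end{pmatrix}.$$ Then there is a neighborhood $\mathcal{N}$ of $U_\alpha$ in the space of real $4\times 4$ matrices such that, for every $U \in \mathcal{N}$, the symmetric two-player game with payoff matrix $U$ has a unique correlated equilibrium (distribution), namely $e_4 \otimes e_4$, the distribution putting probability one on the strategy profile $(4,4)$.
   Context: A $4\times 4$ matrix $U=(u_{ij})$ defines the symmetric two-player game in which each player has pure strategy set $\{1,2,3,4\}$ and a player using $i$ against an opponent using $j$ gets payoff $u_{ij}$. $e_i$ denotes the $i$-th vertex of the simplex $S_4$ of mixed strategies, and for $x\in S_4$, $x\otimes x$ denotes the product distribution on $\{1,\dots,4\}^2$. Correlated equilibrium is in the sense of Aumann (a distribution on pure strategy profiles). *)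

theory Defs
  imports Complex_Main
begin

text \<open>Strategies are 1,2,3,4. A payoff matrix is a function nat => nat => real,
  of which only the entries with indices in {1..4} matter.
  Player 1 using i against player 2 using j gets U i j; player 2 gets U j i.\<close>

definition strats :: "nat set" where
  "strats = {1..4}"

definition is_profile_dist :: "(nat \<Rightarrow> nat \<Rightarrow> real) \<Rightarrow> bool" where
  "is_profile_dist p \<longleftrightarrow>
     (\<forall>i j. p i j \<ge> 0) \<and>
     (\<forall>i j. (i \<notin> strats \<or> j \<notin> strats) \<longrightarrow> p i j = 0) \<and>
     (\<Sum>i\<in>strats. \<Sum>j\<in>strats. p i j) = 1"

definition sym_correlated_eq :: "(nat \<Rightarrow> nat \<Rightarrow> real) \<Rightarrow> (nat \<Rightarrow> nat \<Rightarrow> real) \<Rightarrow> bool" where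
  "sym_correlated_eq U p \<longleftrightarrow> is_profile_dist p \<and>
     (\<forall>i\<in>strats. \<forall>i'\<in>strats. (\<Sum>j\<in>strats. p i j * (U i j - U i' j)) \<ge> 0) \<and>
     (\<forall>j\<in>strats. \<forall>j'\<in>strats. (\<Sum>i\<in>strats. p i j * (U j i - U j' i)) \<ge> 0)"

definition e44 :: "nat \<Rightarrow> nat \<Rightarrow> real" where
  "e44 i j = (if i = 4 \<and> j = 4 then 1 else 0)"

definition U_alpha :: "real \<Rightarrow> real \<Rightarrow> nat \<Rightarrow> nat \<Rightarrow> real" where
  "U_alpha \<epsilon> \<alpha> i j =
     (if i = 1 then (if j = 1 then 0 else if j = 2 then -1 else if j = 3 then \<epsilon> else -\<alpha>)
      else if i = 2 then (if j = 1 then \<epsilon> else if j = 2 then 0 else if j = 3 then -1 else -\<alpha>)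
      else if i = 3 then (if j = 1 then -1 else if j = 2 then \<epsilon> else if j = 3 then 0 else -\<alpha>)
      else (if j = 4 then 0 else (-1 + \<epsilon>) / 3 + \<alpha>))"

end

theory Submission
  imports Defs
begin


definition sg :: "nat \<Rightarrow> nat" where "sg i = (if i = 1 then 2 else if i = 2 then 3 else 1)"

definition cc :: "real \<Rightarrow> (nat \<Rightarrow> nat \<Rightarrow> real) \<Rightarrow> nat \<Rightarrow> nat \<Rightarrow> real" where
 "cc b U i j = (if i \<in> {1,2,3} then (U i j - U 4 j) + b*(U i j - U (sg i) j) else 0)
   + (if j \<in> {1,2,3} then (U j i - U 4 i) + b*(U j i - U (sg j) i) else 0)"

lemma strats_eq: "strats = {1,2,3,4}" by (auto simp: strats_def)

lemma pert:
  fixes U V :: "nat \<Rightarrow> nat \<Rightarrow> real" and b d :: real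
  assumes "b \<ge> 0" "\<forall>i\<in>strats. \<forall>j\<in>strats. \<bar>U i j - V i j\<bar> < d"
    "i1 \<in> strats" "i2 \<in> strats" "i3 \<in> strats" "i4 \<in> strats"
    "j1 \<in> strats" "j2 \<in> strats" "j3 \<in> strats" "j4 \<in> strats"
  shows "(U i1 j1 - U i2 j2) + b*(U i3 j3 - U i4 j4) \<le> (V i1 j1 - V i2 j2) + b*(V i3 j3 - V i4 j4) + 2*d*(1+b)"
proof -
  have a: "\<bar>U i1 j1 - V i1 j1\<bar> < d" "\<bar>U i2 j2 - V i2 j2\<bar> < d" "\<bar>U i3 j3 - V i3 j3\<bar> < d" "\<bar>U i4 j4 - V i4 j4\<bar> < d"
    using assms by auto
  have "b*(U i3 j3 - U i4 j4) \<le> b*((V i3 j3 - V i4 j4) + 2*d)"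
    using a by (intro mult_left_mono) (auto simp: assms abs_less_iff)
  then show ?thesis using a by (auto simp: algebra_simps abs_less_iff)
qed

lemma cc_pert:
  fixes U V :: "nat \<Rightarrow> nat \<Rightarrow> real" and b d :: real
  assumes "b \<ge> 0" "\<forall>i\<in>strats. \<forall>j\<in>strats. \<bar>U i j - V i j\<bar> < d" "i \<in> strats" "j \<in> strats" "d > 0"
  shows "cc b U i j \<le> cc b V i j + 4*d*(1+b)"
proof -
  have s: "4 \<in> strats" "sg k \<in> strats" for k by (auto simp: strats_def sg_def)
  have "(if i \<in> {1,2,3} then (U i j - U 4 j) + b*(U i j - U (sg i) j) else 0) \<le>
        (if i \<in> {1,2,3} then (V i j - V 4 j) + b*(V i j - V (sg i) j) else 0) + 2*d*(1+b)"
    using pert[OF assms(1,2)] s assms(3,4,5,1) by (auto simp: mult_nonneg_nonneg)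
  moreover have "(if j \<in> {1,2,3} then (U j i - U 4 i) + b*(U j i - U (sg j) i) else 0) \<le>
        (if j \<in> {1,2,3} then (V j i - V 4 i) + b*(V j i - V (sg j) i) else 0) + 2*d*(1+b)"
    using pert[OF assms(1,2)] s assms(3,4,5,1) by (auto simp: mult_nonneg_nonneg)
  ultimately show ?thesis unfolding cc_def by linarith
qed


lemma cc0:
  fixes \<epsilon> \<alpha> b :: real
  assumes "0 < \<epsilon>" "\<epsilon> < 1" "0 < \<alpha>" "b * \<epsilon> = (1 - \<epsilon>)/3 + \<alpha>/2"
    "i \<in> strats" "j \<in> strats" "\<not> (i = 4 \<and> j = 4)"
  shows "cc b (U_alpha \<epsilon> \<alpha>) i j \<le> - \<alpha>"
proof -
  have "\<forall>i\<in>{1,2,3,4::nat}. \<forall>j\<in>{1,2,3,4::nat}. \<not> (i = 4 \<and> j = 4) \<longrightarrow> cc b (U_alpha \<epsilon> \<alpha>) i j \<le> - \<alpha>"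
    using assms(3,4) by (simp add: cc_def sg_def U_alpha_def algebra_simps) (auto simp: field_simps)
  then show ?thesis using assms(5-7) unfolding strats_eq by blast
qed


lemma sum_ident:
  "(\<Sum>i\<in>strats. \<Sum>j\<in>strats. p i j * cc b U i j) =
   (\<Sum>i\<in>{1,2,3}. (\<Sum>j\<in>strats. p i j * (U i j - U 4 j)) + b * (\<Sum>j\<in>strats. p i j * (U i j - U (sg i) j)))
 + (\<Sum>j\<in>{1,2,3}. (\<Sum>i\<in>strats. p i j * (U j i - U 4 i)) + b * (\<Sum>i\<in>strats. p i j * (U j i - U (sg j) i)))"
  by (simp add: strats_eq cc_def sg_def algebra_simps)



lemma sum_le_single:
  fixes f :: "'a \<Rightarrow> real"
  assumes "finite A" "a \<in> A" "\<forall>x\<in>A. f x \<le> 0"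
  shows "sum f A \<le> f a"
proof -
  have "sum f A = f a + sum f (A - {a})" using assms by (simp add: sum.remove)
  moreover have "sum f (A - {a}) \<le> 0" using assms by (intro sum_nonpos) auto
  ultimately show ?thesis by simp
qed

theorem proposition1:
  fixes \<epsilon> \<alpha> :: real
  assumes "0 < \<epsilon>" "\<epsilon> < 1" "0 < \<alpha>" "\<alpha> < (1 - \<epsilon>) / 3"
  shows "\<exists>\<delta>>0. \<forall>U :: nat \<Rightarrow> nat \<Rightarrow> real.
           (\<forall>i\<in>strats. \<forall>j\<in>strats. \<bar>U i j - U_alpha \<epsilon> \<alpha> i j\<bar> < \<delta>) \<longrightarrow>
           (\<forall>p. sym_correlated_eq U p \<longleftrightarrow> p = e44)"
proof -
  define b where "b = ((1 - \<epsilon>)/3 + \<alpha>/2) / \<epsilon>"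
  have "(1 - \<epsilon>)/3 + \<alpha>/2 > 0" using assms by linarith
  then have bpos: "b > 0" using assms(1) unfolding b_def by (intro divide_pos_pos)
  have beps: "b * \<epsilon> = (1 - \<epsilon>)/3 + \<alpha>/2" using assms unfolding b_def by simp
  define d where "d = \<alpha> / (8 * (1 + b))"
  have dpos: "d > 0" using bpos assms unfolding d_def by simp
  have d4: "4 * d * (1 + b) = \<alpha> / 2" using bpos unfolding d_def by (simp add: field_simps)
  have dsmall: "2 * d < \<alpha>"
  proof -
    have "8 * d * (1 + b) = \<alpha>" using d4 by linarith
    moreover have "8 * d \<le> 8 * d * (1 + b)" using dpos bpos by (simp add: mult_le_cancel_left1)
    ultimately show ?thesis using assms dpos by linarith
  qed
  show ?thesis
  proof (intro exI[of _ d] conjI allI impI dpos)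
    fix U :: "nat \<Rightarrow> nat \<Rightarrow> real" and p :: "nat \<Rightarrow> nat \<Rightarrow> real"
    assume near: "\<forall>i\<in>strats. \<forall>j\<in>strats. \<bar>U i j - U_alpha \<epsilon> \<alpha> i j\<bar> < d"
    have ccU: "cc b U i j \<le> - (\<alpha>/2)" if "i \<in> strats" "j \<in> strats" "\<not> (i = 4 \<and> j = 4)" for i j
      using cc_pert[OF less_imp_le[OF bpos] near that(1,2) dpos] cc0[OF assms(1,2,3) beps that] bpos d4 by linarith
    have cc44: "cc b U 4 4 = 0" by (simp add: cc_def)
    have near4: "U 4 4 > - d" "U 1 4 < - \<alpha> + d" "U 2 4 < - \<alpha> + d" "U 3 4 < - \<alpha> + d"
      using near by (auto simp: strats_eq U_alpha_def abs_less_iff)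
    have u44: "U 4 4 - U k 4 \<ge> 0" if "k \<in> strats" for k
      using that near4 dsmall by (auto simp: strats_eq)
    show "sym_correlated_eq U p \<longleftrightarrow> p = e44"
    proof
      assume ce: "sym_correlated_eq U p"
      have pd: "is_profile_dist p" using ce by (simp add: sym_correlated_eq_def)
      have c1: "\<And>i i'. i \<in> strats \<Longrightarrow> i' \<in> strats \<Longrightarrow> (\<Sum>j\<in>strats. p i j * (U i j - U i' j)) \<ge> 0"
        and c2: "\<And>j j'. j \<in> strats \<Longrightarrow> j' \<in> strats \<Longrightarrow> (\<Sum>i\<in>strats. p i j * (U j i - U j' i)) \<ge> 0"
        using ce by (auto simp: sym_correlated_eq_def)
      have s4: "4 \<in> strats" and sgs: "\<And>k. sg k \<in> strats" and s123: "\<And>k. k \<in> {1,2,3} \<Longrightarrow> k \<in> strats"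
        by (auto simp: strats_def sg_def)
      have "(\<Sum>i\<in>{1,2,3}. (\<Sum>j\<in>strats. p i j * (U i j - U 4 j)) + b * (\<Sum>j\<in>strats. p i j * (U i j - U (sg i) j))) \<ge> 0"
      proof (rule sum_nonneg)
        fix i :: nat assume "i \<in> {1,2,3}" then have i: "i \<in> strats" by (rule s123)
        show "0 \<le> (\<Sum>j\<in>strats. p i j * (U i j - U 4 j)) + b * (\<Sum>j\<in>strats. p i j * (U i j - U (sg i) j))"
          using c1[OF i s4] c1[OF i sgs] bpos by simp
      qed
      moreover have "(\<Sum>j\<in>{1,2,3}. (\<Sum>i\<in>strats. p i j * (U j i - U 4 i)) + b * (\<Sum>i\<in>strats. p i j * (U j i - U (sg j) i))) \<ge> 0"
      proof (rule sum_nonneg)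
        fix j :: nat assume "j \<in> {1,2,3}" then have j: "j \<in> strats" by (rule s123)
        show "0 \<le> (\<Sum>i\<in>strats. p i j * (U j i - U 4 i)) + b * (\<Sum>i\<in>strats. p i j * (U j i - U (sg j) i))"
          using c2[OF j s4] c2[OF j sgs] bpos by simp
      qed
      ultimately have tot: "(\<Sum>i\<in>strats. \<Sum>j\<in>strats. p i j * cc b U i j) \<ge> 0"
        by (simp add: sum_ident)
      have pnn: "p i j \<ge> 0" for i j using pd by (simp add: is_profile_dist_def)
      have term_np: "p i j * cc b U i j \<le> 0" if "i \<in> strats" "j \<in> strats" for i j
      proof (cases "i = 4 \<and> j = 4")
        case True then show ?thesis by (simp add: cc44)
      next
        case False
        then have "cc b U i j \<le> 0" using ccU[OF that] assms by linarith
        then show ?thesis using pnn[of i j] by (simp add: mult_nonneg_nonpos)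
      qed
      have zero: "p i j = 0" if "i \<in> strats" "j \<in> strats" "\<not> (i = 4 \<and> j = 4)" for i j
      proof -
        have "(\<Sum>i\<in>strats. \<Sum>j\<in>strats. p i j * cc b U i j) \<le> (\<Sum>j\<in>strats. p i j * cc b U i j)"
          using term_np that(1,2) unfolding strats_def by (intro sum_le_single) (auto intro: sum_nonpos)
        also have "\<dots> \<le> p i j * cc b U i j"
          using term_np that(1,2) unfolding strats_def by (intro sum_le_single) auto
        also have "\<dots> \<le> p i j * (- (\<alpha>/2))"
          using ccU[OF that] pnn[of i j] by (intro mult_left_mono)
        finally have "p i j * (\<alpha>/2) \<le> 0" using tot by linarith
        then have "p i j \<le> 0" using assms by (simp add: mult_le_0_iff)
        then show ?thesis using pnn[of i j] by linarith
      qed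
      have out: "p i j = 0" if "i \<notin> strats \<or> j \<notin> strats" for i j
        using pd that by (simp add: is_profile_dist_def)
      have tot1: "(\<Sum>i\<in>strats. \<Sum>j\<in>strats. p i j) = 1" using pd by (simp add: is_profile_dist_def)
      have z: "p 1 1 = 0" "p 1 2 = 0" "p 1 3 = 0" "p 1 4 = 0"
              "p 2 1 = 0" "p 2 2 = 0" "p 2 3 = 0" "p 2 4 = 0"
              "p 3 1 = 0" "p 3 2 = 0" "p 3 3 = 0" "p 3 4 = 0"
              "p 4 1 = 0" "p 4 2 = 0" "p 4 3 = 0"
        by (rule zero; simp add: strats_def)+
      have p44: "p 4 4 = 1" using tot1 z by (simp add: strats_eq)
      show "p = e44"
      proof (intro ext)
        fix i j
        show "p i j = e44 i j"
        proof (cases "i \<in> strats \<and> j \<in> strats")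
          case True
          then show ?thesis using zero[of i j] p44 by (auto simp: e44_def)
        next
          case False
          then show ?thesis using out[of i j] by (auto simp: e44_def strats_def)
        qed
      qed
    next
      assume pe: "p = e44"
      have dist: "is_profile_dist e44"
        by (simp add: is_profile_dist_def e44_def strats_eq)
      have r1: "(\<Sum>j\<in>strats. e44 i j * (U i j - U i' j)) = (if i = 4 then U 4 4 - U i' 4 else 0)" for i i'
        by (simp add: e44_def strats_eq)
      have r2: "(\<Sum>i\<in>strats. e44 i j * (U j i - U j' i)) = (if j = 4 then U 4 4 - U j' 4 else 0)" for j j'
        by (simp add: e44_def strats_eq)
      show "sym_correlated_eq U p"
        unfolding pe sym_correlated_eq_def using dist u44 by (simp add: r1 r2)
    qed
  qed
qed

end
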